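(* Let $X$ be a finite connected poset and $\theta\in\mathcal{M}(X)$. Assume there exist maximal chains $C,D$ of $X$ such that $\theta$ is increasing on $C$ and decreasing on $D$. If $x\in C\cap D$, then $x\in\mathrm{Min}(X)$ or $x\in\mathrm{Max}(X)$.
   Context: $\mathrm{Min}(X)$, $\mathrm{Max}(X)$: minimal and maximal elements. For $x<y$, $e_{xy}$ denotes the incidence-algebra basis element and $B=\{e_{xy}:x<y\}$. For a bijection $\theta:B\to B$ and a maximal chain $C:u_1<\dots<u_m$, $\theta$ is increasing on $C$ if there is a maximal chain $D:v_1<\dots<v_m$ with $\theta(e_{u_iu_j})=e_{v_iv_j}$ for all $i<j$, decreasing if $\theta(e_{u_iu_j})=e_{v_{m-j+1}v_{m-i+1}}$ for all $i<j$. $\mathcal{M}(X)$ is the set of bijections $B\to B$ increasing or decreasing on every maximal chain. *)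

theory Defs
  imports Main
begin

text \<open>The incidence-algebra basis B is identified with the set of pairs (x,y) with x < y,
  the pair (x,y) standing for e_xy.\<close>

definition partial_order_on' :: "'a set \<Rightarrow> ('a \<Rightarrow> 'a \<Rightarrow> bool) \<Rightarrow> bool" where
  "partial_order_on' X le \<longleftrightarrow>
     (\<forall>x\<in>X. le x x) \<and>
     (\<forall>x\<in>X. \<forall>y\<in>X. le x y \<and> le y x \<longrightarrow> x = y) \<and>
     (\<forall>x\<in>X. \<forall>y\<in>X. \<forall>z\<in>X. le x y \<and> le y z \<longrightarrow> le x z)"

definition strict :: "('a \<Rightarrow> 'a \<Rightarrow> bool) \<Rightarrow> 'a \<Rightarrow> 'a \<Rightarrow> bool" where
  "strict le x y \<longleftrightarrow> le x y \<and> x \<noteq> y"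

definition basis :: "'a set \<Rightarrow> ('a \<Rightarrow> 'a \<Rightarrow> bool) \<Rightarrow> ('a \<times> 'a) set" where
  "basis X le = {(x, y). x \<in> X \<and> y \<in> X \<and> strict le x y}"

definition poset_connected :: "'a set \<Rightarrow> ('a \<Rightarrow> 'a \<Rightarrow> bool) \<Rightarrow> bool" where
  "poset_connected X le \<longleftrightarrow> X \<noteq> {} \<and>
     (\<forall>x\<in>X. \<forall>y\<in>X. (x, y) \<in> ({(a, b). a \<in> X \<and> b \<in> X \<and> (le a b \<or> le b a)})\<^sup>*)"

definition is_chain :: "'a set \<Rightarrow> ('a \<Rightarrow> 'a \<Rightarrow> bool) \<Rightarrow> 'a set \<Rightarrow> bool" where
  "is_chain X le C \<longleftrightarrow> C \<subseteq> X \<and> (\<forall>x\<in>C. \<forall>y\<in>C. le x y \<or> le y x)"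

definition maximal_chain :: "'a set \<Rightarrow> ('a \<Rightarrow> 'a \<Rightarrow> bool) \<Rightarrow> 'a set \<Rightarrow> bool" where
  "maximal_chain X le C \<longleftrightarrow> is_chain X le C \<and> (\<forall>D. is_chain X le D \<and> C \<subseteq> D \<longrightarrow> D = C)"

definition enumerates :: "('a \<Rightarrow> 'a \<Rightarrow> bool) \<Rightarrow> 'a set \<Rightarrow> 'a list \<Rightarrow> bool" where
  "enumerates le C u \<longleftrightarrow> set u = C \<and> sorted_wrt (strict le) u"

definition increasing_on ::
  "'a set \<Rightarrow> ('a \<Rightarrow> 'a \<Rightarrow> bool) \<Rightarrow> ('a \<times> 'a \<Rightarrow> 'a \<times> 'a) \<Rightarrow> 'a set \<Rightarrow> bool" where
  "increasing_on X le \<theta> C \<longleftrightarrow>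
     (\<forall>u. enumerates le C u \<longrightarrow>
        (\<exists>D v. maximal_chain X le D \<and> enumerates le D v \<and> length v = length u \<and>
           (\<forall>i j. i < j \<and> j < length u \<longrightarrow> \<theta> (u ! i, u ! j) = (v ! i, v ! j))))"

definition decreasing_on ::
  "'a set \<Rightarrow> ('a \<Rightarrow> 'a \<Rightarrow> bool) \<Rightarrow> ('a \<times> 'a \<Rightarrow> 'a \<times> 'a) \<Rightarrow> 'a set \<Rightarrow> bool" where
  "decreasing_on X le \<theta> C \<longleftrightarrow>
     (\<forall>u. enumerates le C u \<longrightarrow>
        (\<exists>D v. maximal_chain X le D \<and> enumerates le D v \<and> length v = length u \<and>
           (\<forall>i j. i < j \<and> j < length u \<longrightarrow>
              \<theta> (u ! i, u ! j) = (v ! (length u - 1 - j), v ! (length u - 1 - i)))))"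

definition M_set :: "'a set \<Rightarrow> ('a \<Rightarrow> 'a \<Rightarrow> bool) \<Rightarrow> ('a \<times> 'a \<Rightarrow> 'a \<times> 'a) set" where
  "M_set X le = {\<theta>. bij_betw \<theta> (basis X le) (basis X le) \<and>
     (\<forall>C. maximal_chain X le C \<longrightarrow> increasing_on X le \<theta> C \<or> decreasing_on X le \<theta> C)}"

definition Min_el :: "'a set \<Rightarrow> ('a \<Rightarrow> 'a \<Rightarrow> bool) \<Rightarrow> 'a set" where
  "Min_el X le = {x \<in> X. \<not> (\<exists>y\<in>X. strict le y x)}"

definition Max_el :: "'a set \<Rightarrow> ('a \<Rightarrow> 'a \<Rightarrow> bool) \<Rightarrow> 'a set" where
  "Max_el X le = {x \<in> X. \<not> (\<exists>y\<in>X. strict le x y)}"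

end

theory Submission imports Defs begin

lemma po_facts:
  assumes "partial_order_on' X le"
  shows "\<And>x. x \<in> X \<Longrightarrow> le x x"
    and "\<And>x y. x \<in> X \<Longrightarrow> y \<in> X \<Longrightarrow> le x y \<Longrightarrow> le y x \<Longrightarrow> x = y"
    and "\<And>x y z. x \<in> X \<Longrightarrow> y \<in> X \<Longrightarrow> z \<in> X \<Longrightarrow> le x y \<Longrightarrow> le y z \<Longrightarrow> le x z"
  using assms unfolding partial_order_on'_def by blast+

lemma chain_enum:
  assumes po: "partial_order_on' X le" and "finite S" and "is_chain X le S"
  shows "\<exists>u. enumerates le S u"
  using assms(2,3)
proof (induction S rule: finite_induct)
  case empty
  then show ?case by (auto simp: enumerates_def)
next
  case (insert a S)
  have ch: "is_chain X le S" using insert.prems unfolding is_chain_def by auto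
  obtain u where u: "enumerates le S u" using insert.IH ch by blast
  have aX: "a \<in> X" and SX: "S \<subseteq> X" using insert.prems unfolding is_chain_def by auto
  have cmp: "\<And>c. c \<in> S \<Longrightarrow> strict le c a \<or> strict le a c"
    using insert.prems insert.hyps unfolding is_chain_def strict_def by auto
  define u' where "u' = filter (\<lambda>c. strict le c a) u @ a # filter (\<lambda>c. strict le a c) u"
  have "set u' = insert a S" using u cmp unfolding u'_def enumerates_def by auto
  moreover have "sorted_wrt (strict le) u'"
    unfolding u'_def sorted_wrt_append
  proof (intro conjI)
    show "sorted_wrt (strict le) (filter (\<lambda>c. strict le c a) u)"
      using u by (simp add: enumerates_def sorted_wrt_filter)
    show "sorted_wrt (strict le) (a # filter (\<lambda>c. strict le a c) u)"
      using u by (simp add: enumerates_def sorted_wrt_filter)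
    show "\<forall>x\<in>set (filter (\<lambda>c. strict le c a) u). \<forall>y\<in>set (a # filter (\<lambda>c. strict le a c) u). strict le x y"
    proof (intro ballI)
      fix x y assume x: "x \<in> set (filter (\<lambda>c. strict le c a) u)" and y: "y \<in> set (a # filter (\<lambda>c. strict le a c) u)"
      have xX: "x \<in> X" using x u SX by (auto simp: enumerates_def)
      have yX: "y \<in> X" using y u SX aX by (auto simp: enumerates_def)
      show "strict le x y"
      proof (cases "y = a")
        case True then show ?thesis using x by simp
      next
        case False
        then have ay: "strict le a y" using y by auto
        have xa: "strict le x a" using x by auto
        have "le x y" using po_facts(3)[OF po xX aX yX] xa ay by (auto simp: strict_def)
        moreover have "x \<noteq> y" using po_facts(2)[OF po xX aX] xa ay by (auto simp: strict_def)
        ultimately show ?thesis by (simp add: strict_def)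
      qed
    qed
  qed
  ultimately show ?case unfolding enumerates_def by blast
qed

lemma sorted_le:
  assumes po: "partial_order_on' X le" and s: "sorted_wrt (strict le) s" and sX: "set s \<subseteq> X"
    and "i \<le> j" and "j < length s"
  shows "le (s!i) (s!j)"
proof (cases "i = j")
  case True then show ?thesis using po_facts(1)[OF po] sX assms(5) nth_mem by (metis subsetD)
next
  case False then show ?thesis using sorted_wrt_nth_less[OF s, of i j] assms(4,5) by (auto simp: strict_def)
qed

lemma first_min:
  assumes po: "partial_order_on' X le" and mc: "maximal_chain X le S" and e: "enumerates le S s"
    and ne: "s \<noteq> []"
  shows "s!0 \<in> Min_el X le"
proof (rule ccontr)
  have SX: "S \<subseteq> X" and ss: "set s = S" and so: "sorted_wrt (strict le) s"
    using mc e unfolding maximal_chain_def is_chain_def enumerates_def by auto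
  have s0: "s!0 \<in> S" using ne ss by auto
  assume "s!0 \<notin> Min_el X le"
  then obtain y where yX: "y \<in> X" and ys: "strict le y (s!0)" using s0 SX unfolding Min_el_def by auto
  have "is_chain X le (insert y S)"
    unfolding is_chain_def
  proof (intro conjI ballI)
    show "insert y S \<subseteq> X" using yX SX by auto
    fix a b assume a: "a \<in> insert y S" and b: "b \<in> insert y S"
    have low: "le y c" if cS: "c \<in> S" for c
    proof -
      obtain i where i: "i < length s" "s!i = c" using cS ss by (auto simp: in_set_conv_nth)
      have "le (s!0) c" using sorted_le[OF po so, of 0 i] ss SX i by auto
      then show ?thesis using po_facts(3)[OF po yX _ _, of "s!0" c] ys s0 SX cS by (auto simp: strict_def)
    qed
    show "le a b \<or> le b a"
      using a b low mc po_facts(1)[OF po yX] unfolding maximal_chain_def is_chain_def by auto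
  qed
  then have "insert y S = S" using mc unfolding maximal_chain_def by blast
  then have "y \<in> S" by auto
  then have "le (s!0) y"
    using sorted_le[OF po so, of 0] ss SX by (auto simp: in_set_conv_nth)
  then show False using po_facts(2)[OF po yX] ys s0 SX by (auto simp: strict_def)
qed

lemma last_max:
  assumes po: "partial_order_on' X le" and mc: "maximal_chain X le S" and e: "enumerates le S s"
    and ne: "s \<noteq> []"
  shows "s!(length s - 1) \<in> Max_el X le"
proof (rule ccontr)
  have SX: "S \<subseteq> X" and ss: "set s = S" and so: "sorted_wrt (strict le) s"
    using mc e unfolding maximal_chain_def is_chain_def enumerates_def by auto
  let ?t = "s!(length s - 1)"
  have s0: "?t \<in> S" using ne ss by auto
  assume "?t \<notin> Max_el X le"
  then obtain y where yX: "y \<in> X" and ys: "strict le ?t y" using s0 SX unfolding Max_el_def by auto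
  have up: "le c ?t" if cS: "c \<in> S" for c
  proof -
    obtain i where i: "i < length s" "s!i = c" using cS ss by (auto simp: in_set_conv_nth)
    show ?thesis using sorted_le[OF po so, of i "length s - 1"] ss SX i by auto
  qed
  have "is_chain X le (insert y S)"
    unfolding is_chain_def
  proof (intro conjI ballI)
    show "insert y S \<subseteq> X" using yX SX by auto
    fix a b assume a: "a \<in> insert y S" and b: "b \<in> insert y S"
    have high: "le c y" if "c \<in> S" for c
      using po_facts(3)[OF po _ _ yX, of c ?t] up[OF that] ys s0 SX that by (auto simp: strict_def)
    show "le a b \<or> le b a"
      using a b high mc po_facts(1)[OF po yX] unfolding maximal_chain_def is_chain_def by auto
  qed
  then have "insert y S = S" using mc unfolding maximal_chain_def by blast
  then have "y \<in> S" by auto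
  then have "le y ?t" using up by auto
  then show False using po_facts(2)[OF po yX] ys s0 SX by (auto simp: strict_def)
qed

lemma concat_chain:
  assumes po: "partial_order_on' X le" and mC: "maximal_chain X le C" and mD: "maximal_chain X le D"
    and eu: "enumerates le C u" and ew: "enumerates le D w"
    and k: "k < length u" and l: "l < length w" and ux: "u!k = w!l"
  shows "maximal_chain X le (set (take (Suc k) u @ drop (Suc l) w)) \<and>
         enumerates le (set (take (Suc k) u @ drop (Suc l) w)) (take (Suc k) u @ drop (Suc l) w)"
proof -
  have CX: "C \<subseteq> X" and DX: "D \<subseteq> X" using mC mD unfolding maximal_chain_def is_chain_def by auto
  have su: "set u = C" and sou: "sorted_wrt (strict le) u" using eu by (auto simp: enumerates_def)
  have sw: "set w = D" and sow: "sorted_wrt (strict le) w" using ew by (auto simp: enumerates_def)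
  define x where "x = u!k"
  have xX: "x \<in> X" using su CX k x_def by auto
  have memA: "a \<in> set (take (Suc k) u) \<longleftrightarrow> (\<exists>i\<le>k. a = u!i)" for a
    using k by (auto simp: in_set_conv_nth less_Suc_eq_le)
  have memB: "b \<in> set (drop (Suc l) w) \<longleftrightarrow> (\<exists>j. l < j \<and> j < length w \<and> b = w!j)" for b
  proof
    assume "b \<in> set (drop (Suc l) w)"
    then obtain i where "i < length (drop (Suc l) w)" "b = drop (Suc l) w ! i" by (auto simp: in_set_conv_nth)
    then show "\<exists>j. l < j \<and> j < length w \<and> b = w!j" by (intro exI[of _ "Suc l + i"]) auto
  next
    assume "\<exists>j. l < j \<and> j < length w \<and> b = w!j"
    then obtain j where j: "l < j" "j < length w" "b = w!j" by blast
    then have "drop (Suc l) w ! (j - Suc l) = b" "j - Suc l < length (drop (Suc l) w)" by auto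
    then show "b \<in> set (drop (Suc l) w)" by (metis nth_mem)
  qed
  have A_le: "le a x" if "a \<in> set (take (Suc k) u)" for a
    using that memA sorted_le[OF po sou] su CX k x_def by auto
  have B_gt: "strict le x b" if "b \<in> set (drop (Suc l) w)" for b
    using that memB sorted_wrt_nth_less[OF sow, of l] ux x_def by auto
  let ?u' = "take (Suc k) u @ drop (Suc l) w"
  have so': "sorted_wrt (strict le) ?u'"
    unfolding sorted_wrt_append
  proof (intro conjI ballI)
    show "sorted_wrt (strict le) (take (Suc k) u)" using sou by (simp add: sorted_wrt_take)
    show "sorted_wrt (strict le) (drop (Suc l) w)" using sow by (simp add: sorted_wrt_drop)
    fix a b assume a: "a \<in> set (take (Suc k) u)" and b: "b \<in> set (drop (Suc l) w)"
    have aX: "a \<in> X" using a su CX by (meson in_set_takeD subsetD)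
    have bX: "b \<in> X" using b sw DX by (meson in_set_dropD subsetD)
    have "le a b" using po_facts(3)[OF po aX xX bX] A_le[OF a] B_gt[OF b] by (auto simp: strict_def)
    moreover have "a \<noteq> b" using po_facts(2)[OF po aX xX] A_le[OF a] B_gt[OF b] by (auto simp: strict_def)
    ultimately show "strict le a b" by (simp add: strict_def)
  qed
  have sX: "set ?u' \<subseteq> X" using su sw CX DX by (auto dest: in_set_takeD in_set_dropD)
  have xin: "x \<in> set ?u'" using memA x_def by auto
  have ch: "is_chain X le (set ?u')"
    unfolding is_chain_def
  proof (intro conjI ballI)
    show "set ?u' \<subseteq> X" by (rule sX)
    fix a b assume ha: "a \<in> set ?u'" and hb: "b \<in> set ?u'"
    obtain i where "i < length ?u'" "a = ?u'!i" using ha by (metis in_set_conv_nth)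
    moreover obtain j where "j < length ?u'" "b = ?u'!j" using hb by (metis in_set_conv_nth)
    ultimately show "le a b \<or> le b a"
      using sorted_le[OF po so' sX, of i j] sorted_le[OF po so' sX, of j i] by (cases "i \<le> j") auto
  qed
  have "E = set ?u'" if E: "is_chain X le E" "set ?u' \<subseteq> E" for E
  proof (rule ccontr)
    assume "E \<noteq> set ?u'"
    then obtain y where yE: "y \<in> E" and yn: "y \<notin> set ?u'" using E by auto
    have yX: "y \<in> X" using E yE unfolding is_chain_def by auto
    have "le y x \<or> le x y" using E yE xin unfolding is_chain_def by auto
    then show False
    proof
      assume yx: "le y x"
      have "is_chain X le (insert y C)"
        unfolding is_chain_def
      proof (intro conjI ballI)
        show "insert y C \<subseteq> X" using yX CX by auto
        fix a b assume a: "a \<in> insert y C" and b: "b \<in> insert y C"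
        have cmp: "le y c \<or> le c y" if cC: "c \<in> C" for c
        proof -
          obtain i where i: "i < length u" "c = u!i" using cC su by (auto simp: in_set_conv_nth)
          show ?thesis
          proof (cases "i \<le> k")
            case True
            then have "c \<in> set ?u'" using memA i by auto
            then show ?thesis using E yE unfolding is_chain_def by auto
          next
            case False
            then have "le x c" using sorted_le[OF po sou, of k i] su CX i x_def by auto
            then show ?thesis using po_facts(3)[OF po yX xX, of c] yx cC CX by auto
          qed
        qed
        show "le a b \<or> le b a" using a b cmp po_facts(1)[OF po yX] mC
          unfolding maximal_chain_def is_chain_def by auto
      qed
      then have "y \<in> C" using mC unfolding maximal_chain_def by blast
      then obtain i where i: "i < length u" "y = u!i" using su by (auto simp: in_set_conv_nth)
      show False
      proof (cases "i \<le> k")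
        case True then show False using memA i yn by auto
      next
        case False
        then have "strict le x y" using sorted_wrt_nth_less[OF sou, of k i] i x_def by auto
        then show False using po_facts(2)[OF po xX yX] yx by (auto simp: strict_def)
      qed
    next
      assume xy: "le x y"
      have "is_chain X le (insert y D)"
        unfolding is_chain_def
      proof (intro conjI ballI)
        show "insert y D \<subseteq> X" using yX DX by auto
        fix a b assume a: "a \<in> insert y D" and b: "b \<in> insert y D"
        have cmp: "le y c \<or> le c y" if cD: "c \<in> D" for c
        proof -
          obtain j where j: "j < length w" "c = w!j" using cD sw by (auto simp: in_set_conv_nth)
          show ?thesis
          proof (cases "l < j")
            case True
            then have "c \<in> set ?u'" using memB j by auto
            then show ?thesis using E yE unfolding is_chain_def by auto
          next
            case False
            then have "le c x" using sorted_le[OF po sow, of j l] sw DX j l ux x_def by auto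
            then show ?thesis using po_facts(3)[OF po _ xX yX, of c] xy cD DX by auto
          qed
        qed
        show "le a b \<or> le b a" using a b cmp po_facts(1)[OF po yX] mD
          unfolding maximal_chain_def is_chain_def by auto
      qed
      then have "y \<in> D" using mD unfolding maximal_chain_def by blast
      then obtain j where j: "j < length w" "y = w!j" using sw by (auto simp: in_set_conv_nth)
      show False
      proof (cases "l < j")
        case True then show False using memB j yn by auto
      next
        case False
        show False
        proof (cases "j = l")
          case True then show False using j ux x_def xin yn by auto
        next
          case False
          then have "strict le y x" using sorted_wrt_nth_less[OF sow, of j l] j l ux x_def \<open>\<not> l < j\<close> by auto
          then show False using po_facts(2)[OF po xX yX] xy by (auto simp: strict_def)
        qed
      qed
    qed
  qed
  then show ?thesis using ch so' unfolding maximal_chain_def enumerates_def by blast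
qed

theorem lemma3p4:
  fixes X :: "'a set" and le :: "'a \<Rightarrow> 'a \<Rightarrow> bool"
    and \<theta> :: "'a \<times> 'a \<Rightarrow> 'a \<times> 'a" and C D :: "'a set" and x :: 'a
  assumes "finite X" and "partial_order_on' X le" and "poset_connected X le"
    and "\<theta> \<in> M_set X le"
    and "maximal_chain X le C" and "maximal_chain X le D"
    and "increasing_on X le \<theta> C" and "decreasing_on X le \<theta> D"
    and "x \<in> C \<inter> D"
  shows "x \<in> Min_el X le \<or> x \<in> Max_el X le"
proof (rule ccontr)
  assume neg: "\<not> (x \<in> Min_el X le \<or> x \<in> Max_el X le)"
  note po = assms(2) and mC = assms(5) and mD = assms(6)
  have CX: "C \<subseteq> X" and DX: "D \<subseteq> X" using mC mD unfolding maximal_chain_def is_chain_def by auto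
  have fC: "finite C" using finite_subset[OF CX assms(1)] .
  have fD: "finite D" using finite_subset[OF DX assms(1)] .
  have cC: "is_chain X le C" using mC unfolding maximal_chain_def by blast
  have cD: "is_chain X le D" using mD unfolding maximal_chain_def by blast
  obtain u where eu: "enumerates le C u" using chain_enum[OF po fC cC] by blast
  obtain w where ew: "enumerates le D w" using chain_enum[OF po fD cD] by blast
  have su: "set u = C" and sw: "set w = D" using eu ew by (auto simp: enumerates_def)
  obtain k where k: "k < length u" "u!k = x" using assms(9) su by (auto simp: in_set_conv_nth)
  obtain l where l: "l < length w" "w!l = x" using assms(9) sw by (auto simp: in_set_conv_nth)
  have une: "u \<noteq> []" using k(1) by auto
  have "u!0 \<in> Min_el X le" using first_min[OF po mC eu une] .
  then have k0: "0 < k" using neg k by (cases k) auto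
  have wne: "w \<noteq> []" using l(1) by auto
  have "w!(length w - 1) \<in> Max_el X le" using last_max[OF po mD ew wne] .
  then have ln: "l < length w - 1" using neg l by (cases "l = length w - 1") auto
  obtain D1 v where mD1: "maximal_chain X le D1" and ev: "enumerates le D1 v" and lv: "length v = length u"
    and tv: "\<And>i j. i < j \<and> j < length u \<Longrightarrow> \<theta> (u ! i, u ! j) = (v ! i, v ! j)"
    using assms(7) eu unfolding increasing_on_def by blast
  obtain D2 z where mD2: "maximal_chain X le D2" and ez: "enumerates le D2 z" and lz: "length z = length w"
    and tz: "\<And>i j. i < j \<and> j < length w \<Longrightarrow> \<theta> (w ! i, w ! j) = (z ! (length w - 1 - j), z ! (length w - 1 - i))"
    using assms(8) ew unfolding decreasing_on_def by blast
  have th1: "\<theta> (u!0, x) = (v!0, v!k)" using tv[of 0 k] k k0 by auto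
  have th2: "\<theta> (x, w!(length w - 1)) = (z!0, z!(length w - 1 - l))" using tz[of l "length w - 1"] l ln by auto
  define u' where "u' = take (Suc k) u @ drop (Suc l) w"
  have cc: "maximal_chain X le (set u') \<and> enumerates le (set u') u'"
    unfolding u'_def using concat_chain[OF po mC mD eu ew k(1) l(1)] k l by simp
  define L where "L = length u'"
  have L: "L = Suc k + (length w - Suc l)" using k l unfolding L_def u'_def by auto
  have u0: "u'!0 = u!0" using une unfolding u'_def by (simp add: nth_append)
  have uk: "u'!k = x" using k unfolding u'_def by (simp add: nth_append)
  have lt: "length (take (Suc k) u) = Suc k" using k by simp
  have LL: "L - 1 = length (take (Suc k) u) + (length w - Suc l - 1)" using L lt ln by simp
  have "u'!(L - 1) = drop (Suc l) w ! (length w - Suc l - 1)"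
    unfolding LL unfolding u'_def by (rule nth_append_length_plus)
  also have "\<dots> = w!(Suc l + (length w - Suc l - 1))" using ln by (intro nth_drop) auto
  also have "Suc l + (length w - Suc l - 1) = length w - 1" using ln by auto
  finally have uL: "u'!(L - 1) = w!(length w - 1)" .
  have kL: "k < L - 1" using L ln by auto
  have zne: "z \<noteq> []" using lz wne by auto
  have vne: "v \<noteq> []" using lv une by auto
  have D1X: "set v \<subseteq> X" and sov: "sorted_wrt (strict le) v"
    using ev mD1 unfolding enumerates_def maximal_chain_def is_chain_def by auto
  have D2X: "set z \<subseteq> X" and soz: "sorted_wrt (strict le) z"
    using ez mD2 unfolding enumerates_def maximal_chain_def is_chain_def by auto
  have v0X: "v!0 \<in> X" using D1X vne by (meson nth_mem length_greater_0_conv subsetD)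
  have vk: "strict le (v!0) (v!k)" using sorted_wrt_nth_less[OF sov, of 0 k] k0 k(1) lv by auto
  have z0X: "z!0 \<in> X" using D2X zne by (meson nth_mem length_greater_0_conv subsetD)
  have zl: "strict le (z!0) (z!(length w - 1 - l))"
    using sorted_wrt_nth_less[OF soz, of 0 "length w - 1 - l"] ln lz by auto
  have zmin: "z!0 \<in> Min_el X le" using first_min[OF po mD2 ez zne] .
  have vmin: "v!0 \<in> Min_el X le" using first_min[OF po mD1 ev vne] .
  have "increasing_on X le \<theta> (set u') \<or> decreasing_on X le \<theta> (set u')"
    using assms(4) cc unfolding M_set_def by blast
  then show False
  proof
    assume "increasing_on X le \<theta> (set u')"
    then obtain Y y where ly: "length y = L"
      and ty: "\<And>i j. i < j \<and> j < L \<Longrightarrow> \<theta> (u' ! i, u' ! j) = (y ! i, y ! j)"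
      using cc unfolding increasing_on_def L_def by blast
    have "\<theta> (u!0, x) = (y!0, y!k)" using ty[of 0 k] u0 uk k0 kL by auto
    moreover have "\<theta> (x, w!(length w - 1)) = (y!k, y!(L-1))" using ty[of k "L - 1"] uk uL kL by auto
    ultimately have "v!k = z!0" using th1 th2 by auto
    then show False using zmin v0X vk unfolding Min_el_def by auto
  next
    assume "decreasing_on X le \<theta> (set u')"
    then obtain Y y where ly: "length y = L"
      and ty: "\<And>i j. i < j \<and> j < L \<Longrightarrow> \<theta> (u' ! i, u' ! j) = (y ! (L - 1 - j), y ! (L - 1 - i))"
      using cc unfolding decreasing_on_def L_def by blast
    have "\<theta> (u!0, x) = (y!(L - 1 - k), y!(L - 1 - 0))" using ty[of 0 k] u0 uk k0 kL by auto
    moreover have "\<theta> (x, w!(length w - 1)) = (y!(L - 1 - (L - 1)), y!(L - 1 - k))" using ty[of k "L - 1"] uk uL kL by auto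
    ultimately have "v!0 = z!(length w - 1 - l)" using th1 th2 by auto
    then show False using vmin z0X zl unfolding Min_el_def by auto
  qed
qed

end
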